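(* Let $f$ be a maximal coupling function for the kernel $p$ on the alphabet $G$, $\mathbf{U}=\{U_i\}_{i\in\mathbf{Z}}$ i.i.d. uniform on $[0,1)$, and let $A_h$ and $K'$ be as defined below. Put $K'_j=\inf\{m\in\mathbf{N}:U_j<A_m(U_{j-1},\dots,U_{j-m})\}$ for $j\in\mathbf{Z}$, $\tau^{\mathbf{K}'}_n=\sup\{s\le n:K'_j\le j-s\ \text{for all } s\le j\le n\}$, and $R^{\mathbf{K}'}_0=\{\tau^{\mathbf{K}'}_n\ge0\ \text{for all } n\in\mathbf{N}\}$. If $$\prod_{h=0}^{\infty}A_h(U_{h-1},\dots,U_0)^{-1}\in\mathcal{L}^1,$$ then $P(R^{\mathbf{K}'}_0)>0$.
   Context: $G$ finite or countable; histories $\mathbf{w}=(w_{-1},w_{-2},\dots)\in G^{-\mathbf{N}^*}$; kernel $p(g|\mathbf{w})$ measurable in $\mathbf{w}$, summing to 1 over $g$. Admissible histories $\mathcal{H}$: a letter $g$ is forbidden if $p(g|\mathbf{w})=0$ for all $\mathbf{w}$; a word $(s_0,\dots,s_{-n})$ is forbidden if $(s_{-1},\dots,s_{-n})$ is forbidden or $p(s_0|\mathbf{w})=0$ for all histories beginning with $(s_{-1},\dots,s_{-n})$; $\mathbf{w}\in\mathcal{H}$ iff no initial word $(w_{-1},\dots,w_{-n})$ is forbidden. Maximal coupling function: $a_0(g)=\inf\{p(g|\mathbf{z}):\mathbf{z}\in\mathcal{H}\}$; for $k\ge1$, $a_k(g|w_{-1},\dots,w_{-k})=\inf\{p(g|\mathbf{z}):\mathbf{z}\in\mathcal{H},(z_{-1},\dots,z_{-k})=(w_{-1},\dots,w_{-k})\}$;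 $b_k=a_k-a_{k-1}$ (with $a_{-1}\equiv0$); $a_k(w_{-1},\dots,w_{-k})=\sum_ga_k(g|w_{-1},\dots,w_{-k})$, $a_0=\sum_ga_0(g)$. It is assumed that $a_k(w_{-1},\dots,w_{-k})\uparrow1$ for every $\mathbf{w}\in\mathcal{H}$. The interval $[a_{k-1}(w_{-1},\dots,w_{-k+1}),a_k(w_{-1},\dots,w_{-k}))$ is partitioned into subintervals $B_k(g|w_{-1},\dots,w_{-k})$ of length $b_k(g|w_{-1},\dots,w_{-k})$, $g\in G$ (for $k=0$, $[0,a_0)$ is partitioned into $B_0(g)$ of length $a_0(g)$), and $f(u|\mathbf{w})=g$ on $\bigcup_kB_k(g|w_{-1},\dots,w_{-k})$. $A_0=a_0$; for $h\ge1$ and $(u_1,\dots,u_h)\in[0,1)^h$, $A_h(u_1,\dots,u_h)=\inf\{a_h(w_{-1},\dots,w_{-h}):\mathbf{w}\in J_h(u_1,\dots,u_h)\}$ where $J_h(u_1,\dots,u_h)=\{\mathbf{w}\in\mathcal{H}:w_{-k}=g \text{ whenever } u_k\in B_0(g),\ g\in G,\ 1\le k\le h\}$. Thus $A_h(U_{h-1},\dots,U_0)$ is $A_h$ evaluated at $(u_1,\dots,u_h)=(U_{h-1},\dots,U_0)$. *)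

theory Defs
  imports "HOL-Probability.Probability"
begin

text \<open>Histories: a history (w_{-1}, w_{-2}, ...) is encoded as a function
  w :: nat => 'g with w k = w_{-(k+1)}.  The kernel p g w is p(g | w).\<close>

text \<open>Words (s_0, s_{-1}, ..., s_{-n}) are encoded as lists [s_0, s_{-1}, ..., s_{-n}].\<close>
fun forbidden :: "('g \<Rightarrow> (nat \<Rightarrow> 'g) \<Rightarrow> real) \<Rightarrow> 'g list \<Rightarrow> bool" where
  "forbidden p [] = False"
| "forbidden p (s # ws) =
     (forbidden p ws \<or> (\<forall>w. (\<forall>i<length ws. w i = ws ! i) \<longrightarrow> p s w = 0))"

definition admissible :: "('g \<Rightarrow> (nat \<Rightarrow> 'g) \<Rightarrow> real) \<Rightarrow> (nat \<Rightarrow> 'g) set" where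
  "admissible p = {w. \<forall>n. \<not> forbidden p (map w [0..<n])}"

text \<open>a_k(g | w_{-1},...,w_{-k}) (k = 0 gives a_0(g)); infima in ennreal (Inf {} = top).\<close>
definition coup_a :: "('g \<Rightarrow> (nat \<Rightarrow> 'g) \<Rightarrow> real) \<Rightarrow> nat \<Rightarrow> 'g \<Rightarrow> (nat \<Rightarrow> 'g) \<Rightarrow> ennreal" where
  "coup_a p k g w = (INF z \<in> {z \<in> admissible p. \<forall>i<k. z i = w i}. ennreal (p g z))"

definition coup_a_sum :: "('g \<Rightarrow> (nat \<Rightarrow> 'g) \<Rightarrow> real) \<Rightarrow> nat \<Rightarrow> (nat \<Rightarrow> 'g) \<Rightarrow> ennreal" where
  "coup_a_sum p k w = (\<integral>\<^sup>+ g. coup_a p k g w \<partial>count_space UNIV)"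

text \<open>J_h(u_1,...,u_h), with u :: nat => real and u k = u_k for 1 <= k <= h.\<close>
definition coup_J :: "('g \<Rightarrow> (nat \<Rightarrow> 'g) \<Rightarrow> real) \<Rightarrow> ('g \<Rightarrow> real set) \<Rightarrow> nat \<Rightarrow> (nat \<Rightarrow> real) \<Rightarrow> (nat \<Rightarrow> 'g) set" where
  "coup_J p B0 h u = {w \<in> admissible p. \<forall>k\<in>{1..h}. \<forall>g. u k \<in> B0 g \<longrightarrow> w (k - 1) = g}"

definition coup_A :: "('g \<Rightarrow> (nat \<Rightarrow> 'g) \<Rightarrow> real) \<Rightarrow> ('g \<Rightarrow> real set) \<Rightarrow> nat \<Rightarrow> (nat \<Rightarrow> real) \<Rightarrow> ennreal" where
  "coup_A p B0 h u =
     (if h = 0 then coup_a_sum p 0 undefined else (INF w \<in> coup_J p B0 h u. coup_a_sum p h w))"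

text \<open>K'_j = inf {m. U_j < A_m(U_{j-1},...,U_{j-m})}, in enat (inf of empty set = infinity).\<close>
definition coup_K :: "('g \<Rightarrow> (nat \<Rightarrow> 'g) \<Rightarrow> real) \<Rightarrow> ('g \<Rightarrow> real set) \<Rightarrow> (int \<Rightarrow> 'a \<Rightarrow> real) \<Rightarrow> int \<Rightarrow> 'a \<Rightarrow> enat" where
  "coup_K p B0 U j \<omega> =
     (INF m \<in> {m. ereal (U j \<omega>) < enn2ereal (coup_A p B0 m (\<lambda>k. U (j - int k) \<omega>))}. enat m)"

text \<open>tau_n = sup {s <= n. K'_j <= j - s for all s <= j <= n}, in ereal (sup of empty set = -infinity).\<close>
definition coup_tau :: "('g \<Rightarrow> (nat \<Rightarrow> 'g) \<Rightarrow> real) \<Rightarrow> ('g \<Rightarrow> real set) \<Rightarrow> (int \<Rightarrow> 'a \<Rightarrow> real) \<Rightarrow> int \<Rightarrow> 'a \<Rightarrow> ereal" where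
  "coup_tau p B0 U n \<omega> =
     Sup ((\<lambda>s. ereal (real_of_int s)) `
       {s. s \<le> n \<and> (\<forall>j. s \<le> j \<and> j \<le> n \<longrightarrow> coup_K p B0 U j \<omega> \<le> enat (nat (j - s)))})"

definition coup_R0 :: "('g \<Rightarrow> (nat \<Rightarrow> 'g) \<Rightarrow> real) \<Rightarrow> ('g \<Rightarrow> real set) \<Rightarrow> 'a measure \<Rightarrow> (int \<Rightarrow> 'a \<Rightarrow> real) \<Rightarrow> 'a set" where
  "coup_R0 p B0 M U = {\<omega> \<in> space M. \<forall>n::nat. coup_tau p B0 U (int n) \<omega> \<ge> 0}"

definition coup_prod :: "('g \<Rightarrow> (nat \<Rightarrow> 'g) \<Rightarrow> real) \<Rightarrow> ('g \<Rightarrow> real set) \<Rightarrow> (int \<Rightarrow> 'a \<Rightarrow> real) \<Rightarrow> 'a \<Rightarrow> ennreal" where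
  "coup_prod p B0 U \<omega> =
     lim (\<lambda>N. \<Prod>h<N. inverse (coup_A p B0 h (\<lambda>k. U (int h - int k) \<omega>)))"

end

theory Submission
  imports Defs "HOL-Analysis.Infinite_Set_Sum"
begin

abbreviation "Qu \<equiv> uniform_measure lborel {0..<1::real}"

lemma Qu_prob: "prob_space Qu"
  by (intro prob_space_uniform_measure) auto

lemma indep_split:
  assumes P: "prob_space M" and ind: "prob_space.indep_var M N1 X N2 Y"
    and f: "f \<in> borel_measurable (N1 \<Otimes>\<^sub>M N2)"
  shows "(\<integral>\<^sup>+\<omega>. f (X \<omega>, Y \<omega>) \<partial>M) = (\<integral>\<^sup>+\<omega>. (\<integral>\<^sup>+\<omega>'. f (X \<omega>', Y \<omega>) \<partial>M) \<partial>M)"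
proof -
  interpret prob_space M by fact
  have rv: "X \<in> measurable M N1" "Y \<in> measurable M N2"
    using ind by (blast dest: indep_var_rv1 indep_var_rv2)+
  have eq: "distr M N1 X \<Otimes>\<^sub>M distr M N2 Y = distr M (N1 \<Otimes>\<^sub>M N2) (\<lambda>x. (X x, Y x))"
    using ind indep_var_distribution_eq by blast
  interpret PY: prob_space "distr M N2 Y" by (rule prob_space_distr[OF rv(2)])
  interpret Q: prob_space "distr M N1 X" by (rule prob_space_distr[OF rv(1)])
  interpret pair_sigma_finite "distr M N1 X" "distr M N2 Y" ..
  have f': "f \<in> borel_measurable (distr M N1 X \<Otimes>\<^sub>M distr M N2 Y)"
    using f by (simp add: sets_pair_measure_cong)
  have "(\<integral>\<^sup>+\<omega>. f (X \<omega>, Y \<omega>) \<partial>M) = (\<integral>\<^sup>+z. f z \<partial>distr M (N1 \<Otimes>\<^sub>M N2) (\<lambda>x. (X x, Y x)))"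
    using rv f by (simp add: nn_integral_distr)
  also have "\<dots> = (\<integral>\<^sup>+z. f z \<partial>(distr M N1 X \<Otimes>\<^sub>M distr M N2 Y))"
    using eq by simp
  also have "\<dots> = (\<integral>\<^sup>+ y. (\<integral>\<^sup>+ x. f (x, y) \<partial>distr M N1 X) \<partial>distr M N2 Y)"
    using f' by (subst nn_integral_snd) auto
  also have meas: "(\<lambda>y. \<integral>\<^sup>+ x. f (x, y) \<partial>distr M N1 X) \<in> borel_measurable N2"
  proof -
    have g: "(\<lambda>(y,x). f (x,y)) \<in> borel_measurable (N2 \<Otimes>\<^sub>M distr M N1 X)"
      using measurable_pair_swap[OF f'] by (simp add: sets_pair_measure_cong)
    from Q.borel_measurable_nn_integral_fst[OF g] show ?thesis
      by simp
  qed
  have "(\<integral>\<^sup>+ y. (\<integral>\<^sup>+ x. f (x, y) \<partial>distr M N1 X) \<partial>distr M N2 Y) = (\<integral>\<^sup>+\<omega>. (\<integral>\<^sup>+x. f (x, Y \<omega>) \<partial>distr M N1 X) \<partial>M)"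
    using meas rv by (subst nn_integral_distr) auto
  also have "\<dots> = (\<integral>\<^sup>+\<omega>. (\<integral>\<^sup>+\<omega>'. f (X \<omega>', Y \<omega>) \<partial>M) \<partial>M)"
  proof (rule nn_integral_cong)
    fix \<omega> assume "\<omega> \<in> space M"
    then have "Y \<omega> \<in> space N2" using rv(2) by (auto simp: measurable_def)
    then have "(\<lambda>x. f (x, Y \<omega>)) \<in> borel_measurable N1" using f by simp
    then show "(\<integral>\<^sup>+x. f (x, Y \<omega>) \<partial>distr M N1 X) = (\<integral>\<^sup>+\<omega>'. f (X \<omega>', Y \<omega>) \<partial>M)"
      using rv by (subst nn_integral_distr) auto
  qed
  finally show ?thesis .
qed

definition cellf :: "('g \<Rightarrow> real set) \<Rightarrow> real \<Rightarrow> 'g option" where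
  "cellf B0 r = (if \<exists>g. r \<in> B0 g then Some (SOME g. r \<in> B0 g) else None)"

lemma cellf_Some: "disjoint_family B0 \<Longrightarrow> cellf B0 r = Some g \<longleftrightarrow> r \<in> B0 g"
  unfolding cellf_def disjoint_family_on_def
  by (auto intro: someI2)

lemma cellf_None: "cellf B0 r = None \<longleftrightarrow> (\<forall>g. r \<notin> B0 g)"
  unfolding cellf_def by auto

lemma cell_case:
  assumes "disjoint_family B0"
  shows "(\<forall>g. r \<in> B0 g \<longrightarrow> P g) \<longleftrightarrow> (case cellf B0 r of None \<Rightarrow> True | Some g \<Rightarrow> P g)"
proof (cases "cellf B0 r")
  case None
  then have "\<forall>g. r \<notin> B0 g" using cellf_None[of B0 r] by simp
  then show ?thesis using None by simp
next
  case (Some g)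
  have "r \<in> B0 g' \<longleftrightarrow> g' = g" for g'
    using cellf_Some[OF assms, of r g'] Some by auto
  then show ?thesis using Some by simp
qed
lemma J_char: "disjoint_family B0 \<Longrightarrow> coup_J p B0 h u =
   {w \<in> admissible p. \<forall>k\<in>{1..h}. case cellf B0 (u k) of None \<Rightarrow> True | Some g \<Rightarrow> w (k - 1) = g}"
  unfolding coup_J_def
  apply (rule Collect_cong)
  apply (rule conj_cong, simp)
  apply (rule ball_cong, simp)
  subgoal for w k
    by (rule cell_case, assumption)
  done

lemma A_cong:
  assumes "disjoint_family B0" "\<And>k. k \<in> {1..h} \<Longrightarrow> cellf B0 (u k) = cellf B0 (u' k)"
  shows "coup_A p B0 h u = coup_A p B0 h u'"
proof -
  have "coup_J p B0 h u = coup_J p B0 h u'"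
    unfolding J_char[OF assms(1)] using assms(2) by auto
  then show ?thesis by (simp add: coup_A_def)
qed

lemma A_mono_none:
  assumes "disjoint_family B0" "\<And>k. k \<in> {1..h} \<Longrightarrow> cellf B0 (u' k) = None \<or> cellf B0 (u' k) = cellf B0 (u k)"
  shows "coup_A p B0 h u' \<le> coup_A p B0 h u"
proof -
  have "coup_J p B0 h u \<subseteq> coup_J p B0 h u'"
    unfolding J_char[OF assms(1)]
  proof safe
    fix w k assume w: "\<forall>k\<in>{1..h}. case cellf B0 (u k) of None \<Rightarrow> True | Some g \<Rightarrow> w (k - 1) = g"
      and k: "k \<in> {1..h}"
    then show "case cellf B0 (u' k) of None \<Rightarrow> True | Some g \<Rightarrow> w (k - 1) = g"
      using assms(2)[OF k] by (cases "cellf B0 (u' k)") auto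
  qed
  then have "(INF w\<in>coup_J p B0 h u'. coup_a_sum p h w) \<le> (INF w\<in>coup_J p B0 h u. coup_a_sum p h w)"
    by (rule INF_superset_mono) simp
  then show ?thesis unfolding coup_A_def by (cases "h = 0") simp_all
qed


lemma sum1:
  fixes p :: "'g \<Rightarrow> (nat \<Rightarrow> 'g) \<Rightarrow> real"
  assumes nn: "\<And>g. p g w \<ge> 0" and hs: "((\<lambda>g. p g w) has_sum 1) UNIV"
  shows "(\<integral>\<^sup>+ g. ennreal (p g w) \<partial>count_space UNIV) = 1"
proof -
  have sm: "(\<lambda>g. p g w) summable_on UNIV" using hs by (rule has_sum_imp_summable)
  have "(\<lambda>g. norm (p g w)) summable_on UNIV"
    using sm nn by simp
  note abs = abs_summable_equivalent[THEN iffD1, OF this]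
  have "(\<integral>\<^sup>+ g. ennreal (p g w) \<partial>count_space UNIV) = ennreal (infsetsum (\<lambda>g. p g w) UNIV)"
    by (rule nn_integral_conv_infsetsum[OF abs]) (use nn in auto)
  also have "infsetsum (\<lambda>g. p g w) UNIV = infsum (\<lambda>g. p g w) UNIV"
    by (rule infsetsum_infsum[OF abs])
  also have "\<dots> = 1" using hs by (rule infsumI)
  finally show ?thesis by simp
qed

definition prep :: "'g \<Rightarrow> (nat \<Rightarrow> 'g) \<Rightarrow> nat \<Rightarrow> 'g" where
  "prep g z = (\<lambda>i. if i = 0 then g else z (i - 1))"

lemma a0_pos_p: "coup_a p 0 g x > 0 \<Longrightarrow> z \<in> admissible p \<Longrightarrow> p g z > 0"
proof -
  assume a: "coup_a p 0 g x > 0" and z: "z \<in> admissible p"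
  have "coup_a p 0 g x \<le> ennreal (p g z)"
    unfolding coup_a_def by (rule INF_lower) (use z in auto)
  with a have "ennreal (p g z) > 0" by (rule less_le_trans)
  then show ?thesis by (simp add: ennreal_less_zero_iff) 
qed

lemma adm_prep:
  assumes g: "coup_a p 0 g x > 0" and z: "z \<in> admissible p"
  shows "prep g z \<in> admissible p"
  unfolding admissible_def
proof (safe)
  fix n
  show "forbidden p (map (prep g z) [0..<n]) \<Longrightarrow> False"
  proof (cases n)
    case 0 then show "forbidden p (map (prep g z) [0..<n]) \<Longrightarrow> False" by simp
  next
    case (Suc m)
    have eq: "map (prep g z) [0..<n] = g # map z [0..<m]"
      unfolding Suc map_upt_Suc by (simp add: prep_def)
    have nf: "\<not> forbidden p (map z [0..<m])" using z by (simp add: admissible_def)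
    have "p g z > 0" by (rule a0_pos_p[OF g z])
    then have "\<not> (\<forall>w. (\<forall>i<length (map z [0..<m]). w i = map z [0..<m] ! i) \<longrightarrow> p g w = 0)"
      by (auto intro!: exI[of _ z])
    then show "forbidden p (map (prep g z) [0..<n]) \<Longrightarrow> False"
      using nf unfolding eq by simp
  qed
qed

definition lfun :: "'g list \<Rightarrow> (nat \<Rightarrow> 'g) \<Rightarrow> nat \<Rightarrow> 'g" where
  "lfun cs z = (\<lambda>i. if i < length cs then cs ! i else z (i - length cs))"

lemma adm_lfun:
  assumes "\<And>c. c \<in> set cs \<Longrightarrow> coup_a p 0 c x > 0" and z: "z \<in> admissible p"
  shows "lfun cs z \<in> admissible p"
  using assms(1)
proof (induction cs)
  case Nil then show ?case using z by (simp add: lfun_def)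
next
  case (Cons c cs)
  have eq: "lfun (c # cs) z = prep c (lfun cs z)"
    by (auto simp: lfun_def prep_def fun_eq_iff nth_Cons')
  show ?case unfolding eq
    by (rule adm_prep) (use Cons in auto)
qed


lemma coup_a0_indep: "coup_a p 0 g x = coup_a p 0 g y"
  by (simp add: coup_a_def)

lemma coup_a_mono0: "coup_a p 0 g x \<le> coup_a p h g w"
  unfolding coup_a_def by (rule INF_superset_mono) auto

lemma coup_a_sum_mono0: "coup_a_sum p 0 x \<le> coup_a_sum p h w"
  unfolding coup_a_sum_def by (rule nn_integral_mono) (rule coup_a_mono0)


lemma Qu_emeasure: "S \<in> sets borel \<Longrightarrow> emeasure Qu S = emeasure lborel ({0..<1} \<inter> S)"
  by (subst emeasure_uniform_measure) (auto simp: divide_ennreal_def)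

lemma Qu_nn: "f \<in> borel_measurable borel \<Longrightarrow> (\<integral>\<^sup>+x. f x \<partial>Qu) = (\<integral>\<^sup>+x. f x * indicator {0..<1} x \<partial>lborel)"
  by (subst nn_integral_uniform_measure) (auto simp: divide_ennreal_def)

lemma Qu_ge:
  fixes A :: ennreal
  assumes "A \<le> 1"
  shows "(\<integral>\<^sup>+x. indicator {x. enn2ereal A \<le> ereal x} x \<partial>Qu) = 1 - A"
proof -
  define r where "r = enn2real A"
  have Anot: "A \<noteq> top" using assms by (auto simp: top_unique)
  have A: "A = ennreal r" unfolding r_def using Anot by (simp add: less_top[symmetric])
  have r: "0 \<le> r" "r \<le> 1" unfolding r_def using enn2real_mono[OF assms] by auto
  have S: "{x. enn2ereal A \<le> ereal x} = {r..}" using r by (auto simp: A)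
  have "(\<integral>\<^sup>+x. indicator {x. enn2ereal A \<le> ereal x} x \<partial>Qu) = emeasure Qu {r..}"
    unfolding S by simp
  also have "\<dots> = emeasure lborel {r..<1}"
  proof (subst Qu_emeasure)
    have "{0..<1} \<inter> {r..} = {r..<1::real}" using r by auto
    then show "emeasure lborel ({0..<1} \<inter> {r..}) = emeasure lborel {r..<1}" by simp
  qed simp
  also have "\<dots> = ennreal (1 - r)" using r by simp
  also have "\<dots> = 1 - A" unfolding A using r by (simp add: ennreal_minus[symmetric])
  finally show ?thesis .
qed

lemma avg:
  fixes \<phi> :: "real \<Rightarrow> ennreal" and a :: real
  assumes a: "0 \<le> a" "a \<le> 1" and phi: "\<phi> \<in> borel_measurable borel"
    and le: "\<And>x. \<phi> x \<le> \<phi> a" and eq: "\<And>x. a \<le> x \<Longrightarrow> x < 1 \<Longrightarrow> \<phi> x = \<phi> a"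
  shows "(\<integral>\<^sup>+x. indicator {..<a} x * \<phi> x \<partial>Qu) \<le> ennreal a * (\<integral>\<^sup>+x. \<phi> x \<partial>Qu)"
proof -
  define I0 where "I0 = (\<integral>\<^sup>+x. \<phi> x * indicator {0..<a} x \<partial>lborel)"
  have L: "(\<integral>\<^sup>+x. indicator {..<a} x * \<phi> x \<partial>Qu) = I0"
  proof -
    have "(\<integral>\<^sup>+x. indicator {..<a} x * \<phi> x \<partial>Qu) = (\<integral>\<^sup>+x. (indicator {..<a} x * \<phi> x) * indicator {0..<1} x \<partial>lborel)"
      by (rule Qu_nn) (use phi in measurable)
    also have "\<dots> = I0" unfolding I0_def
    proof (rule nn_integral_cong)
      fix x :: real
      show "indicator {..<a} x * \<phi> x * indicator {0..<1} x = \<phi> x * indicator {0..<a} x"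
        using a by (cases "x < a"; cases "0 \<le> x") (simp_all add: indicator_def)
    qed
    finally show ?thesis .
  qed
  have "(\<integral>\<^sup>+x. \<phi> x \<partial>Qu) = (\<integral>\<^sup>+x. \<phi> x * indicator {0..<1} x \<partial>lborel)"
    by (rule Qu_nn[OF phi])
  also have "\<dots> = (\<integral>\<^sup>+x. \<phi> x * indicator {0..<a} x + \<phi> a * indicator {a..<1} x \<partial>lborel)"
  proof (rule nn_integral_cong)
    fix x :: real
    show "\<phi> x * indicator {0..<1} x = \<phi> x * indicator {0..<a} x + \<phi> a * indicator {a..<1} x"
      using a eq[of x] by (cases "x < a"; cases "0 \<le> x"; cases "x < 1") (simp_all add: indicator_def)
  qed
  also have "\<dots> = I0 + \<phi> a * ennreal (1 - a)"
    unfolding I0_def using phi a by (subst nn_integral_add) (auto simp: nn_integral_cmult)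
  finally have R: "(\<integral>\<^sup>+x. \<phi> x \<partial>Qu) = I0 + \<phi> a * ennreal (1 - a)" .
  have "I0 \<le> (\<integral>\<^sup>+x. \<phi> a * indicator {0..<a} x \<partial>lborel)"
    unfolding I0_def by (rule nn_integral_mono) (use le in \<open>auto split: split_indicator\<close>)
  also have "\<dots> = \<phi> a * ennreal a" using a by (simp add: nn_integral_cmult)
  finally have I0le: "I0 \<le> \<phi> a * ennreal a" .
  have one: "ennreal a + ennreal (1 - a) = 1" using a by (simp add: ennreal_plus[symmetric] del: ennreal_plus)
  have "I0 = (ennreal a + ennreal (1 - a)) * I0" by (simp add: one)
  also have "\<dots> = ennreal a * I0 + ennreal (1 - a) * I0" by (simp add: distrib_right)
  also have "\<dots> \<le> ennreal a * I0 + ennreal (1 - a) * (\<phi> a * ennreal a)"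
    by (intro add_left_mono mult_left_mono I0le) auto
  also have "\<dots> = ennreal a * (I0 + \<phi> a * ennreal (1 - a))"
    by (simp add: distrib_left mult_ac)
  finally show ?thesis unfolding L R .
qed


lemma inv_ge:
  fixes A :: ennreal
  assumes "A \<le> 1"
  shows "1 + (1 - A) \<le> inverse A"
proof -
  have Anot: "A \<noteq> top" using assms by (auto simp: top_unique)
  define r where "r = enn2real A"
  have A: "A = ennreal r" unfolding r_def using Anot by (simp add: less_top[symmetric])
  have r: "0 \<le> r" "r \<le> 1" unfolding r_def using enn2real_mono[OF assms] by auto
  show ?thesis
  proof (cases "r = 0")
    case True then show ?thesis by (simp add: A)
  next
    case False
    then have rp: "0 < r" using r by simp
    have e1: "1 - A = ennreal (1 - r)" unfolding A using r by (simp add: ennreal_minus[symmetric])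
    have "1 + (1 - A) = ennreal 1 + ennreal (1 - r)" unfolding e1 by simp
    also have "\<dots> = ennreal (2 - r)" using r by (subst ennreal_plus[symmetric]) auto
    finally have "1 + (1 - A) = ennreal (2 - r)" .
    also have "\<dots> \<le> ennreal (inverse r)"
    proof (rule ennreal_leI)
      have "(2 - r) * r = 1 - (1 - r)^2" by (simp add: power2_eq_square algebra_simps)
      then have "(2 - r) * r \<le> 1" using zero_le_power2[of "1 - r"] by linarith
      then show "2 - r \<le> inverse r" using rp by (simp add: field_simps)
    qed
    also have "\<dots> = inverse A" unfolding A using rp by (simp add: inverse_ennreal)
    finally show ?thesis .
  qed
qed

lemma prod_bound:
  fixes A :: "nat \<Rightarrow> ennreal"
  assumes le: "\<And>h. A h \<le> 1"
  shows "(\<Sum>h. (1 - A h)) \<le> lim (\<lambda>N. \<Prod>h<N. inverse (A h))"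
    and "inverse (A 0) \<le> lim (\<lambda>N. \<Prod>h<N. inverse (A h))"
proof -
  define P where "P N = (\<Prod>h<N. inverse (A h))" for N
  have ge1: "1 \<le> inverse (A h)" for h
  proof -
    have "(1::ennreal) \<le> 1 + (1 - A h)" by simp
    also have "\<dots> \<le> inverse (A h)" by (rule inv_ge[OF le])
    finally show ?thesis .
  qed
  have inc: "incseq P"
  proof (rule incseq_SucI)
    fix N
    have "P N * 1 \<le> P N * inverse (A N)" by (rule mult_left_mono[OF ge1]) simp
    then show "P N \<le> P (Suc N)" by (simp add: P_def mult.commute)
  qed
  have limP: "lim P = (SUP N. P N)"
    by (rule limI) (rule LIMSEQ_SUP[OF inc])
  have bound: "1 + (\<Sum>h<N. (1 - A h)) \<le> P N" for N
  proof (induction N)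
    case 0 then show ?case by (simp add: P_def)
  next
    case (Suc N)
    have "1 + (\<Sum>h<Suc N. (1 - A h)) = (1 + (\<Sum>h<N. (1 - A h))) + (1 - A N)" by (simp add: add_ac)
    also have "\<dots> \<le> (1 + (\<Sum>h<N. (1 - A h))) * (1 + (1 - A N))"
      by (simp add: ring_distribs add_ac add_increasing2)
    also have "\<dots> \<le> P N * inverse (A N)"
      by (intro mult_mono Suc inv_ge le) auto
    finally show ?case by (simp add: P_def mult.commute)
  qed
  show "(\<Sum>h. (1 - A h)) \<le> lim (\<lambda>N. \<Prod>h<N. inverse (A h))"
    unfolding P_def[symmetric] limP suminf_eq_SUP
  proof (rule SUP_mono)
    fix N show "\<exists>m\<in>UNIV. (\<Sum>h<N. (1 - A h)) \<le> P m"
      using bound[of N] by (intro bexI[of _ N]) (auto intro: order_trans[OF _ bound] add_increasing)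
  qed
  show "inverse (A 0) \<le> lim (\<lambda>N. \<Prod>h<N. inverse (A h))"
    unfolding P_def[symmetric] limP
    by (rule SUP_upper2[of 1]) (auto simp: P_def)
qed

locale cset =
  fixes p :: "'g::countable \<Rightarrow> (nat \<Rightarrow> 'g) \<Rightarrow> real" and B0 :: "'g \<Rightarrow> real set"
  assumes kernel_nonneg: "\<And>g w. p g w \<ge> 0"
    and kernel_sum: "\<And>w. ((\<lambda>g. p g w) has_sum 1) UNIV"
    and B0_int: "\<And>g. \<exists>l. B0 g = {l..<l + enn2real (coup_a p 0 g undefined)}"
    and B0_disj: "disjoint_family B0"
    and B0_union: "(\<Union>g. B0 g) = {0..<enn2real (coup_a_sum p 0 undefined)}"
begin

lemma cell_pos: assumes "cellf B0 r = Some g" shows "coup_a p 0 g x > 0"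
proof -
  have r: "r \<in> B0 g" using assms cellf_Some[OF B0_disj] by blast
  obtain l where l: "B0 g = {l..<l + enn2real (coup_a p 0 g undefined)}" using B0_int by blast
  have "enn2real (coup_a p 0 g undefined) > 0" using r l by auto
  then have "coup_a p 0 g undefined > 0"
    by (metis enn2real_0 gr_zeroI less_irrefl)
  then show ?thesis using coup_a0_indep by metis
qed

lemma asum_le1: assumes w: "w \<in> admissible p" shows "coup_a_sum p h w \<le> 1"
proof -
  have "coup_a_sum p h w \<le> (\<integral>\<^sup>+ g. ennreal (p g w) \<partial>count_space UNIV)"
    unfolding coup_a_sum_def
    by (rule nn_integral_mono) (unfold coup_a_def, rule INF_lower, use w in auto)
  also have "\<dots> = 1" by (rule sum1[OF kernel_nonneg kernel_sum])
  finally show ?thesis .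
qed

lemma J_ne:
  assumes adm: "admissible p \<noteq> {}"
  shows "coup_J p B0 h u \<noteq> {}"
proof -
  obtain z where z: "z \<in> admissible p" using adm by blast
  show ?thesis
  proof (cases "\<exists>k\<in>{1..h}. cellf B0 (u k) \<noteq> None")
    case False
    then have "z \<in> coup_J p B0 h u" using z by (auto simp: J_char[OF B0_disj])
    then show ?thesis by blast
  next
    case True
    then obtain k0 gs where gs: "cellf B0 (u k0) = Some gs" by blast
    define cs where "cs = map (\<lambda>i. case cellf B0 (u (Suc i)) of None \<Rightarrow> gs | Some g \<Rightarrow> g) [0..<h]"
    have "lfun cs z \<in> admissible p"
    proof (rule adm_lfun[OF _ z])
      fix c assume "c \<in> set cs"
      then obtain i where "c = (case cellf B0 (u (Suc i)) of None \<Rightarrow> gs | Some g \<Rightarrow> g)"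
        unfolding cs_def by auto
      then show "coup_a p 0 c undefined > 0"
        using cell_pos[OF gs] by (cases "cellf B0 (u (Suc i))") (auto intro: cell_pos)
    qed
    moreover have "case cellf B0 (u k) of None \<Rightarrow> True | Some g \<Rightarrow> lfun cs z (k - 1) = g"
      if "k \<in> {1..h}" for k
      using that by (cases "cellf B0 (u k)") (auto simp: lfun_def cs_def)
    ultimately have "lfun cs z \<in> coup_J p B0 h u" by (auto simp: J_char[OF B0_disj])
    then show ?thesis by blast
  qed
qed

lemma A_le1:
  assumes adm: "admissible p \<noteq> {}"
  shows "coup_A p B0 h u \<le> 1"
proof (cases "h = 0")
  case True
  obtain z where z: "z \<in> admissible p" using adm by blast
  have "coup_a_sum p 0 undefined \<le> coup_a_sum p 0 z"
    unfolding coup_a_sum_def by (rule nn_integral_mono) (simp add: coup_a0_indep[of p _ undefined z])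
  also have "\<dots> \<le> 1" by (rule asum_le1[OF z])
  finally show ?thesis using True by (simp add: coup_A_def)
next
  case False
  obtain w where w: "w \<in> coup_J p B0 h u" using J_ne[OF adm] by blast
  have "(INF w\<in>coup_J p B0 h u. coup_a_sum p h w) \<le> coup_a_sum p h w" by (rule INF_lower[OF w])
  also have "\<dots> \<le> 1" using w by (intro asum_le1) (simp add: coup_J_def)
  finally show ?thesis using False by (simp add: coup_A_def)
qed

lemma A_ge0: "coup_A p B0 0 u' \<le> coup_A p B0 h u"
proof (cases "h = 0")
  case True then show ?thesis by (simp add: coup_A_def)
next
  case False
  have "coup_a_sum p 0 undefined \<le> (INF w\<in>coup_J p B0 h u. coup_a_sum p h w)"
    by (rule INF_greatest) (rule coup_a_sum_mono0)
  then show ?thesis using False by (simp add: coup_A_def)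
qed


definition "a0r = enn2real (coup_a_sum p 0 undefined)"

definition "repr c = (case c of None \<Rightarrow> a0r | Some g \<Rightarrow> (SOME r. r \<in> B0 g))"

lemma cell_a0r: "cellf B0 a0r = None"
proof -
  have "a0r \<notin> (\<Union>g. B0 g)" unfolding B0_union a0r_def by simp
  then show ?thesis by (simp add: cellf_None)
qed

lemma cell_repr: "cellf B0 (repr (cellf B0 r)) = cellf B0 r"
proof (cases "cellf B0 r")
  case None then show ?thesis by (simp add: repr_def cell_a0r)
next
  case (Some g)
  then have "r \<in> B0 g" using cellf_Some[OF B0_disj] by blast
  then have "(SOME r. r \<in> B0 g) \<in> B0 g" by (rule someI)
  moreover have "repr (cellf B0 r) = (SOME r. r \<in> B0 g)" using Some by (simp add: repr_def)
  ultimately show ?thesis using Some cellf_Some[OF B0_disj] by metis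
qed

definition "Phi h L = coup_A p B0 h (\<lambda>k. repr (L ! (k - 1)))"

lemma A_Phi: "coup_A p B0 h u = Phi h (map (\<lambda>k. cellf B0 (u k)) [1..<h+1])"
  unfolding Phi_def
proof (rule A_cong[OF B0_disj])
  fix k assume k: "k \<in> {1..h}"
  then have "map (\<lambda>k. cellf B0 (u k)) [1..<h+1] ! (k - 1) = cellf B0 (u k)"
    by (subst nth_map) (auto simp del: upt_Suc)
  then show "cellf B0 (u k) = cellf B0 (repr (map (\<lambda>k. cellf B0 (u k)) [1..<h + 1] ! (k - 1)))"
    by (simp add: cell_repr)
qed

lemma B0_sets: "B0 g \<in> sets borel"
proof -
  obtain l where "B0 g = {l..<l + enn2real (coup_a p 0 g undefined)}" using B0_int by blast
  then show ?thesis by simp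
qed

lemma cell_meas: "cellf B0 \<in> measurable borel (count_space UNIV)"
  unfolding measurable_count_space_eq2_countable
proof (intro conjI ballI)
  fix c :: "'g option"
  show "cellf B0 -` {c} \<inter> space borel \<in> sets borel"
  proof (cases c)
    case None
    have "cellf B0 -` {c} = - (\<Union>g. B0 g)" using None by (auto simp: cellf_None)
    also have "\<dots> = - {0..<a0r}" unfolding B0_union a0r_def ..
    finally show ?thesis by simp
  next
    case (Some g)
    have "cellf B0 -` {c} = B0 g" using Some by (auto simp: cellf_Some[OF B0_disj])
    then show ?thesis using B0_sets by simp
  qed
qed simp

lemma cells_meas:
  assumes "\<And>k. k \<in> set L \<Longrightarrow> F k \<in> borel_measurable N"
  shows "(\<lambda>\<omega>. map (\<lambda>k. cellf B0 (F k \<omega>)) L) \<in> measurable N (count_space UNIV)"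
  using assms
proof (induction L)
  case Nil then show ?case by simp
next
  case (Cons k L)
  have c: "(\<lambda>\<omega>. cellf B0 (F k \<omega>)) \<in> measurable N (count_space UNIV)"
    using measurable_compose[OF Cons.prems[of k] cell_meas] by simp
  have r: "(\<lambda>\<omega>. map (\<lambda>k. cellf B0 (F k \<omega>)) L) \<in> measurable N (count_space UNIV)"
    using Cons by simp
  have pr: "(\<lambda>\<omega>. (cellf B0 (F k \<omega>), map (\<lambda>k. cellf B0 (F k \<omega>)) L)) \<in> measurable N (count_space (UNIV \<times> UNIV))"
    using measurable_Pair[OF c r] by (simp add: pair_measure_countable)
  have "(\<lambda>\<omega>. case_prod Cons (cellf B0 (F k \<omega>), map (\<lambda>k. cellf B0 (F k \<omega>)) L)) \<in> measurable N (count_space UNIV)"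
    by (rule measurable_compose[OF pr]) simp
  then show ?case by simp
qed

lemma A_meas:
  assumes "\<And>k. k \<in> {1..h} \<Longrightarrow> F k \<in> borel_measurable N"
  shows "(\<lambda>\<omega>. coup_A p B0 h (\<lambda>k. F k \<omega>)) \<in> borel_measurable N"
proof -
  have m: "(\<lambda>\<omega>. map (\<lambda>k. cellf B0 (F k \<omega>)) [1..<h+1]) \<in> measurable N (count_space UNIV)"
    by (rule cells_meas) (use assms in auto)
  have "(\<lambda>\<omega>. Phi h (map (\<lambda>k. cellf B0 (F k \<omega>)) [1..<h+1])) \<in> borel_measurable N"
    by (rule measurable_compose[OF m]) simp
  then show ?thesis unfolding A_Phi[of h] .
qed

end


locale pset0 = cset p B0 for p :: "'g::countable \<Rightarrow> (nat \<Rightarrow> 'g) \<Rightarrow> real" and B0 +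
  fixes M :: "'a measure" and U :: "int \<Rightarrow> 'a \<Rightarrow> real"
  assumes prob: "prob_space M"
    and indep: "prob_space.indep_vars M (\<lambda>_. borel) U UNIV"
    and unif: "\<And>i. distr M lborel (U i) = uniform_measure lborel {0..<1::real}"
begin

interpretation P: prob_space M by (rule prob)

lemma U_meas[measurable]: "U i \<in> borel_measurable M"
  using indep unfolding P.indep_vars_def by auto

definition "AA h x = coup_A p B0 h (\<lambda>k. x (int h - int k))"

lemma AA_meas:
  assumes "{0..<int h} \<subseteq> I"
  shows "AA h \<in> borel_measurable (PiM I (\<lambda>_. borel))"
  unfolding AA_def
  by (rule A_meas) (use assms in \<open>auto intro!: measurable_component_singleton\<close>)

lemma AA_restrict:
  assumes "{0..<int h} \<subseteq> I"
  shows "AA h (restrict x I) = AA h x"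
  unfolding AA_def
proof (rule A_cong[OF B0_disj])
  fix k assume "k \<in> {1..h}"
  then have "int h - int k \<in> I" using assms by auto
  then show "cellf B0 (restrict x I (int h - int k)) = cellf B0 (x (int h - int k))" by simp
qed

lemma split_lemma:
  assumes kI: "k \<notin> I" and f: "f \<in> borel_measurable (borel \<Otimes>\<^sub>M PiM I (\<lambda>_. borel))"
  shows "(\<integral>\<^sup>+\<omega>. f (U k \<omega>, restrict (\<lambda>i. U i \<omega>) I) \<partial>M)
       = (\<integral>\<^sup>+\<omega>. (\<integral>\<^sup>+x. f (x, restrict (\<lambda>i. U i \<omega>) I) \<partial>Qu) \<partial>M)"
proof -
  have ind: "prob_space.indep_var M (PiM {k} (\<lambda>_. borel)) (\<lambda>\<omega>. restrict (\<lambda>i. U i \<omega>) {k}) (PiM I (\<lambda>_. borel)) (\<lambda>\<omega>. restrict (\<lambda>i. U i \<omega>) I)"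
    by (rule P.indep_var_restrict[OF indep]) (use kI in auto)
  define f' where "f' z = f (fst z k, snd z)" for z :: "(int \<Rightarrow> real) \<times> (int \<Rightarrow> real)"
  have f'm: "f' \<in> borel_measurable (PiM {k} (\<lambda>_. borel) \<Otimes>\<^sub>M PiM I (\<lambda>_. borel))"
  proof -
    have "(\<lambda>z::(int \<Rightarrow> real) \<times> (int \<Rightarrow> real). (fst z k, snd z)) \<in> measurable (PiM {k} (\<lambda>_. borel) \<Otimes>\<^sub>M PiM I (\<lambda>_. borel)) (borel \<Otimes>\<^sub>M PiM I (\<lambda>_. borel))"
      by (intro measurable_Pair measurable_compose[OF measurable_fst] measurable_component_singleton measurable_snd) auto
    from measurable_compose[OF this f] show ?thesis unfolding f'_def[abs_def] by simp
  qed
  have "(\<integral>\<^sup>+\<omega>. f (U k \<omega>, restrict (\<lambda>i. U i \<omega>) I) \<partial>M) = (\<integral>\<^sup>+\<omega>. f' (restrict (\<lambda>i. U i \<omega>) {k}, restrict (\<lambda>i. U i \<omega>) I) \<partial>M)"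
    by (simp add: f'_def)
  also have "\<dots> = (\<integral>\<^sup>+\<omega>. (\<integral>\<^sup>+\<omega>'. f' (restrict (\<lambda>i. U i \<omega>') {k}, restrict (\<lambda>i. U i \<omega>) I) \<partial>M) \<partial>M)"
    by (rule indep_split[OF prob ind f'm])
  also have "\<dots> = (\<integral>\<^sup>+\<omega>. (\<integral>\<^sup>+x. f (x, restrict (\<lambda>i. U i \<omega>) I) \<partial>Qu) \<partial>M)"
  proof (rule nn_integral_cong)
    fix \<omega> assume "\<omega> \<in> space M"
    have "restrict (\<lambda>i. U i \<omega>) I \<in> space (PiM I (\<lambda>_. borel))" by (simp add: space_PiM)
    then have fm: "(\<lambda>x. f (x, restrict (\<lambda>i. U i \<omega>) I)) \<in> borel_measurable borel" using f by simp
    have "(\<integral>\<^sup>+\<omega>'. f' (restrict (\<lambda>i. U i \<omega>') {k}, restrict (\<lambda>i. U i \<omega>) I) \<partial>M) = (\<integral>\<^sup>+\<omega>'. f (U k \<omega>', restrict (\<lambda>i. U i \<omega>) I) \<partial>M)"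
      by (simp add: f'_def)
    also have "\<dots> = (\<integral>\<^sup>+x. f (x, restrict (\<lambda>i. U i \<omega>) I) \<partial>distr M lborel (U k))"
      using fm by (subst nn_integral_distr) (auto simp: measurable_lborel1)
    also have "\<dots> = (\<integral>\<^sup>+x. f (x, restrict (\<lambda>i. U i \<omega>) I) \<partial>Qu)" by (simp add: unif)
    finally show "(\<integral>\<^sup>+\<omega>'. f' (restrict (\<lambda>i. U i \<omega>') {k}, restrict (\<lambda>i. U i \<omega>) I) \<partial>M) = (\<integral>\<^sup>+x. f (x, restrict (\<lambda>i. U i \<omega>) I) \<partial>Qu)" .
  qed
  finally show ?thesis .
qed


definition "Aw h \<omega> = AA h (\<lambda>i. U i \<omega>)"
definition "Dm m = {y::int\<Rightarrow>real. \<forall>k<m. y (int k) < a0r}"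
definition "Dw m = {\<omega>\<in>space M. \<forall>k<m. U (int k) \<omega> < a0r}"
definition "Fc h = {\<omega>\<in>space M. enn2ereal (Aw h \<omega>) \<le> ereal (U (int h) \<omega>)}"

lemma Aw_meas[measurable]: "(\<lambda>\<omega>. Aw h \<omega>) \<in> borel_measurable M"
  unfolding Aw_def AA_def by (rule A_meas) simp

lemma Dw_sets[measurable]: "Dw m \<in> sets M"
  unfolding Dw_def by measurable

lemma Fc_sets[measurable]: "Fc h \<in> sets M"
  unfolding Fc_def by measurable

lemma Dm_meas:
  assumes "{0..<int m} \<subseteq> I"
  shows "(\<lambda>y::int\<Rightarrow>real. indicator (Dm m) y :: ennreal) \<in> borel_measurable (PiM I (\<lambda>_. borel))"
  unfolding Dm_def
  apply (rule borel_measurable_indicator')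
  apply measurable
  using assms apply auto
  done

lemma Dm_restrict:
  assumes "{0..<int m} \<subseteq> I"
  shows "restrict x I \<in> Dm m \<longleftrightarrow> x \<in> Dm m"
proof -
  have "int k \<in> I" if "k < m" for k using assms that by auto
  then show ?thesis unfolding Dm_def by auto
qed

lemma Dw_Dm: "\<omega> \<in> space M \<Longrightarrow> \<omega> \<in> Dw m \<longleftrightarrow> (\<lambda>i. U i \<omega>) \<in> Dm m"
  unfolding Dw_def Dm_def by auto

lemma inner_meas:
  assumes f: "f \<in> borel_measurable (borel \<Otimes>\<^sub>M N)"
  shows "(\<lambda>y. \<integral>\<^sup>+x. f (x, y) \<partial>Qu) \<in> borel_measurable N"
proof -
  interpret Q: prob_space Qu by (rule Qu_prob)
  have f': "f \<in> borel_measurable (Qu \<Otimes>\<^sub>M N)"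
    using f by (simp add: sets_pair_measure_cong)
  have g: "(\<lambda>(y,x). f (x,y)) \<in> borel_measurable (N \<Otimes>\<^sub>M Qu)"
    using measurable_pair_swap[OF f'] by simp
  from Q.borel_measurable_nn_integral_fst[OF g] show ?thesis by simp
qed


definition "G = {\<omega>\<in>space M. \<forall>h. ereal (U (int h) \<omega>) < enn2ereal (Aw h \<omega>)}"

lemma G_sets[measurable]: "G \<in> sets M"
  unfolding G_def by measurable

lemma A_U_meas[measurable]: "(\<lambda>\<omega>. coup_A p B0 m (\<lambda>k. U (j - int k) \<omega>)) \<in> borel_measurable M"
  by (rule A_meas) simp

lemma K_le_iff: "coup_K p B0 U j \<omega> \<le> enat m \<longleftrightarrow>
   (\<exists>m'\<in>{..m}. ereal (U j \<omega>) < enn2ereal (coup_A p B0 m' (\<lambda>k. U (j - int k) \<omega>)))"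
proof
  assume "\<exists>m'\<in>{..m}. ereal (U j \<omega>) < enn2ereal (coup_A p B0 m' (\<lambda>k. U (j - int k) \<omega>))"
  then obtain m' where m': "m' \<le> m" "ereal (U j \<omega>) < enn2ereal (coup_A p B0 m' (\<lambda>k. U (j - int k) \<omega>))" by auto
  show "coup_K p B0 U j \<omega> \<le> enat m"
    unfolding coup_K_def by (rule INF_lower2[of m']) (use m' in auto)
next
  assume K: "coup_K p B0 U j \<omega> \<le> enat m"
  show "\<exists>m'\<in>{..m}. ereal (U j \<omega>) < enn2ereal (coup_A p B0 m' (\<lambda>k. U (j - int k) \<omega>))"
  proof (rule ccontr)
    assume "\<not> ?thesis"
    then have "\<And>m'. ereal (U j \<omega>) < enn2ereal (coup_A p B0 m' (\<lambda>k. U (j - int k) \<omega>)) \<Longrightarrow> Suc m \<le> m'"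
      by (metis atMost_iff not_less_eq_eq)
    then have "enat (Suc m) \<le> coup_K p B0 U j \<omega>"
      unfolding coup_K_def by (intro INF_greatest) auto
    from this K have "enat (Suc m) \<le> enat m" by (rule order_trans)
    then show False by simp
  qed
qed

lemma K_pred[measurable]: "Measurable.pred M (\<lambda>\<omega>. coup_K p B0 U j \<omega> \<le> enat m)"
proof -
  have "(\<lambda>\<omega>. coup_K p B0 U j \<omega> \<le> enat m) =
    (\<lambda>\<omega>. \<exists>m'\<in>{..m}. ereal (U j \<omega>) < enn2ereal (coup_A p B0 m' (\<lambda>k. U (j - int k) \<omega>)))"
    by (rule ext) (rule K_le_iff)
  also have "Measurable.pred M \<dots>" by measurable
  finally show ?thesis .
qed

lemma tau_ge0_iff: "0 \<le> coup_tau p B0 U n \<omega> \<longleftrightarrow>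
  (\<exists>s\<in>{0..n}. \<forall>j\<in>{s..n}. coup_K p B0 U j \<omega> \<le> enat (nat (j - s)))"
proof
  assume "\<exists>s\<in>{0..n}. \<forall>j\<in>{s..n}. coup_K p B0 U j \<omega> \<le> enat (nat (j - s))"
  then obtain s where s: "0 \<le> s" "s \<le> n" "\<forall>j\<in>{s..n}. coup_K p B0 U j \<omega> \<le> enat (nat (j - s))" by auto
  have "ereal (real_of_int s) \<le> coup_tau p B0 U n \<omega>"
    unfolding coup_tau_def by (rule Sup_upper) (use s in auto)
  moreover have "0 \<le> ereal (real_of_int s)" using s by simp
  ultimately show "0 \<le> coup_tau p B0 U n \<omega>" by (rule order_trans[rotated])
next
  assume t: "0 \<le> coup_tau p B0 U n \<omega>"
  show "\<exists>s\<in>{0..n}. \<forall>j\<in>{s..n}. coup_K p B0 U j \<omega> \<le> enat (nat (j - s))"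
  proof (rule ccontr)
    assume "\<not> ?thesis"
    then have neg: "s \<le> n \<Longrightarrow> (\<forall>j. s \<le> j \<and> j \<le> n \<longrightarrow> coup_K p B0 U j \<omega> \<le> enat (nat (j - s))) \<Longrightarrow> s \<le> -1" for s
      by force
    have "coup_tau p B0 U n \<omega> \<le> ereal (-1)"
      unfolding coup_tau_def
    proof (rule Sup_least)
      fix x assume "x \<in> (\<lambda>s. ereal (real_of_int s)) ` {s. s \<le> n \<and> (\<forall>j. s \<le> j \<and> j \<le> n \<longrightarrow> coup_K p B0 U j \<omega> \<le> enat (nat (j - s)))}"
      then obtain s where "x = ereal (real_of_int s)" "s \<le> -1" using neg by blast
      then show "x \<le> ereal (-1)" by simp
    qed
    from t this have "0 \<le> ereal (-1)" by (rule order_trans)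
    then show False by simp
  qed
qed

lemma R0_eq: "coup_R0 p B0 M U = {\<omega>\<in>space M. \<forall>n::nat. \<exists>s\<in>{0..int n}. \<forall>j\<in>{s..int n}. coup_K p B0 U j \<omega> \<le> enat (nat (j - s))}"
  unfolding coup_R0_def using tau_ge0_iff by simp

lemma R0_sets: "coup_R0 p B0 M U \<in> sets M"
  unfolding R0_eq by measurable

lemma G_R0: "G \<subseteq> coup_R0 p B0 M U"
proof
  fix \<omega> assume \<omega>: "\<omega> \<in> G"
  then have sp: "\<omega> \<in> space M" by (simp add: G_def)
  have "coup_K p B0 U j \<omega> \<le> enat (nat (j - 0))" if "j \<in> {0..int n}" for j n
  proof -
    have j: "int (nat j) = j" using that by simp
    have "\<forall>h. ereal (U (int h) \<omega>) < enn2ereal (Aw h \<omega>)" using \<omega> by (simp add: G_def)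
    then have "ereal (U (int (nat j)) \<omega>) < enn2ereal (Aw (nat j) \<omega>)" by blast
    then have "ereal (U j \<omega>) < enn2ereal (coup_A p B0 (nat j) (\<lambda>k. U (j - int k) \<omega>))"
      unfolding Aw_def AA_def j .
    then show ?thesis unfolding K_le_iff by auto
  qed
  then show "\<omega> \<in> coup_R0 p B0 M U" unfolding R0_eq using sp by fastforce
qed

lemma adm_empty:
  assumes "admissible p = {}"
  shows "coup_A p B0 h u = top"
proof (cases "h = 0")
  case True
  have "coup_a p 0 g undefined = top" for g unfolding coup_a_def using assms by simp
  then have "coup_a_sum p 0 undefined = (\<integral>\<^sup>+g. top \<partial>count_space (UNIV::'g set))" unfolding coup_a_sum_def by simp
  also have "(\<integral>\<^sup>+g. top \<partial>count_space (UNIV::'g set)) = top" by (simp add: ennreal_top_mult emeasure_count_space_eq_0)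
  finally show ?thesis using True by (simp add: coup_A_def)
next
  case False
  have "coup_J p B0 h u = {}" using assms by (simp add: coup_J_def)
  then show ?thesis using False by (simp add: coup_A_def)
qed

end

locale pset = pset0 +
  assumes adm: "admissible p \<noteq> {}"
begin

interpretation P: prob_space M by (rule prob)

lemma A0_eq: "coup_A p B0 0 u = ennreal a0r"
proof -
  have "coup_A p B0 0 u \<le> 1" by (rule A_le1[OF adm])
  then have "coup_A p B0 0 u \<noteq> top" by (auto simp: top_unique)
  then show ?thesis unfolding a0r_def by (simp add: coup_A_def less_top[symmetric])
qed

lemma a0r_bounds: "0 \<le> a0r" "a0r \<le> 1"
proof -
  show "0 \<le> a0r" unfolding a0r_def by simp
  have "ennreal a0r \<le> 1" using A_le1[OF adm, of 0 undefined] by (simp add: A0_eq)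
  then show "a0r \<le> 1" by (simp add: ennreal_le_1)
qed

lemma AA_ge: "ennreal a0r \<le> AA h y"
  unfolding AA_def using A_ge0[of undefined h] by (simp add: A0_eq)

lemma AA_le1: "AA h y \<le> 1"
  unfolding AA_def by (rule A_le1[OF adm])

lemma C1:
  assumes Hh: "H \<le> h"
  shows "emeasure M (Dw H \<inter> Fc h) = (\<integral>\<^sup>+\<omega>. indicator (Dw H) \<omega> * (1 - Aw h \<omega>) \<partial>M)"
proof -
  define I where "I = {0..<int h}"
  have hI: "int h \<notin> I" unfolding I_def by auto
  have AAm[measurable]: "AA h \<in> borel_measurable (PiM I (\<lambda>_. borel))" by (rule AA_meas) (simp add: I_def)
  have Dmm[measurable]: "(\<lambda>y::int\<Rightarrow>real. indicator (Dm H) y :: ennreal) \<in> borel_measurable (PiM I (\<lambda>_. borel))"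
    by (rule Dm_meas) (use Hh in \<open>auto simp: I_def\<close>)
  define f where "f z = indicator (Dm H) (snd z) * (indicator {z. enn2ereal (AA h (snd z)) \<le> ereal (fst z)} z :: ennreal)"
    for z :: "real \<times> (int \<Rightarrow> real)"
  have fm: "f \<in> borel_measurable (borel \<Otimes>\<^sub>M PiM I (\<lambda>_. borel))"
    unfolding f_def[abs_def] by measurable
  have "emeasure M (Dw H \<inter> Fc h) = (\<integral>\<^sup>+\<omega>. indicator (Dw H \<inter> Fc h) \<omega> \<partial>M)"
    by simp
  also have "\<dots> = (\<integral>\<^sup>+\<omega>. f (U (int h) \<omega>, restrict (\<lambda>i. U i \<omega>) I) \<partial>M)"
  proof (rule nn_integral_cong)
    fix \<omega> assume \<omega>: "\<omega> \<in> space M"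
    have r1: "restrict (\<lambda>i. U i \<omega>) I \<in> Dm H \<longleftrightarrow> \<omega> \<in> Dw H"
      using Dm_restrict[of H I] Dw_Dm[OF \<omega>] Hh by (auto simp: I_def)
    have r2: "AA h (restrict (\<lambda>i. U i \<omega>) I) = Aw h \<omega>"
      unfolding Aw_def by (rule AA_restrict) (simp add: I_def)
    show "indicator (Dw H \<inter> Fc h) \<omega> = f (U (int h) \<omega>, restrict (\<lambda>i. U i \<omega>) I)"
      unfolding f_def using \<omega> r1 r2 by (auto simp: Fc_def indicator_def)
  qed
  also have "\<dots> = (\<integral>\<^sup>+\<omega>. (\<integral>\<^sup>+x. f (x, restrict (\<lambda>i. U i \<omega>) I) \<partial>Qu) \<partial>M)"
    by (rule split_lemma[OF hI fm])
  also have "\<dots> = (\<integral>\<^sup>+\<omega>. indicator (Dw H) \<omega> * (1 - Aw h \<omega>) \<partial>M)"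
  proof (rule nn_integral_cong)
    fix \<omega> assume \<omega>: "\<omega> \<in> space M"
    have r1: "restrict (\<lambda>i. U i \<omega>) I \<in> Dm H \<longleftrightarrow> \<omega> \<in> Dw H"
      using Dm_restrict[of H I] Dw_Dm[OF \<omega>] Hh by (auto simp: I_def)
    have r2: "AA h (restrict (\<lambda>i. U i \<omega>) I) = Aw h \<omega>"
      unfolding Aw_def by (rule AA_restrict) (simp add: I_def)
    have le1: "Aw h \<omega> \<le> 1" unfolding Aw_def AA_def by (rule A_le1[OF adm])
    have "(\<integral>\<^sup>+x. f (x, restrict (\<lambda>i. U i \<omega>) I) \<partial>Qu)
        = indicator (Dw H) \<omega> * (\<integral>\<^sup>+x. indicator {x. enn2ereal (Aw h \<omega>) \<le> ereal x} x \<partial>Qu)"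
      using r1 r2
      by (subst nn_integral_cmult[symmetric]) (auto simp: f_def indicator_def intro!: nn_integral_cong)
    also have "\<dots> = indicator (Dw H) \<omega> * (1 - Aw h \<omega>)" by (simp add: Qu_ge[OF le1])
    finally show "(\<integral>\<^sup>+x. f (x, restrict (\<lambda>i. U i \<omega>) I) \<partial>Qu) = indicator (Dw H) \<omega> * (1 - Aw h \<omega>)" .
  qed
  finally show ?thesis .
qed


lemma cell_ge: "a0r \<le> x \<Longrightarrow> cellf B0 x = None"
proof -
  assume "a0r \<le> x"
  then have "x \<notin> (\<Union>g. B0 g)" unfolding B0_union a0r_def[symmetric] by auto
  then show ?thesis by (simp add: cellf_None)
qed

lemma C2:
  assumes mH: "m < H" and Hh: "H \<le> h"
  shows "(\<integral>\<^sup>+\<omega>. indicator (Dw (Suc m)) \<omega> * (1 - Aw h \<omega>) \<partial>M)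
    \<le> ennreal a0r * (\<integral>\<^sup>+\<omega>. indicator (Dw m) \<omega> * (1 - Aw h \<omega>) \<partial>M)"
proof -
  define I where "I = {0..<int h} - {int m}"
  have mI: "int m \<notin> I" unfolding I_def by auto
  have mI2: "{0..<int m} \<subseteq> I" unfolding I_def using mH Hh by auto
  define upd where "upd z = (snd z)(int m := fst z)" for z :: "real \<times> (int \<Rightarrow> real)"
  have AAu[measurable]: "(\<lambda>z. AA h (upd z)) \<in> borel_measurable (borel \<Otimes>\<^sub>M PiM I (\<lambda>_. borel))"
    unfolding AA_def
  proof (rule A_meas[where F="\<lambda>k z. upd z (int h - int k)"])
    fix k assume k: "k \<in> {1..h}"
    show "(\<lambda>z. upd z (int h - int k)) \<in> borel_measurable (borel \<Otimes>\<^sub>M PiM I (\<lambda>_. borel))"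
    proof (cases "int h - int k = int m")
      case True then show ?thesis by (simp add: upd_def)
    next
      case False
      then have j: "int h - int k \<in> I" using k by (auto simp: I_def)
      have "(\<lambda>z. upd z (int h - int k)) = (\<lambda>z. snd z (int h - int k))"
        using False by (simp add: upd_def fun_eq_iff)
      moreover have "(\<lambda>z. snd z (int h - int k)) \<in> borel_measurable (borel \<Otimes>\<^sub>M PiM I (\<lambda>_. borel))"
        by (rule measurable_compose[OF measurable_snd measurable_component_singleton[OF j]])
      ultimately show ?thesis by simp
    qed
  qed
  have Dmm[measurable]: "(\<lambda>y::int\<Rightarrow>real. indicator (Dm m) y :: ennreal) \<in> borel_measurable (PiM I (\<lambda>_. borel))"
    by (rule Dm_meas[OF mI2])
  define \<psi> where "\<psi> z = indicator (Dm m) (snd z) * (1 - AA h (upd z))" for z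
  have \<psi>m[measurable]: "\<psi> \<in> borel_measurable (borel \<Otimes>\<^sub>M PiM I (\<lambda>_. borel))"
    unfolding \<psi>_def[abs_def] by measurable
  have fm: "(\<lambda>z. indicator {..<a0r} (fst z) * \<psi> z) \<in> borel_measurable (borel \<Otimes>\<^sub>M PiM I (\<lambda>_. borel))"
    by measurable
  define Y where "Y \<omega> = restrict (\<lambda>i. U i \<omega>) I" for \<omega>
  have Ym[measurable]: "Y \<in> measurable M (PiM I (\<lambda>_. borel))"
    unfolding Y_def by (rule measurable_restrict) simp
  have key: "AA h (upd (U (int m) \<omega>, Y \<omega>)) = Aw h \<omega>" "Y \<omega> \<in> Dm m \<longleftrightarrow> \<omega> \<in> Dw m" if \<omega>: "\<omega> \<in> space M" for \<omega>
  proof -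
    show "AA h (upd (U (int m) \<omega>, Y \<omega>)) = Aw h \<omega>"
      unfolding AA_def Aw_def
    proof (rule A_cong[OF B0_disj])
      fix k assume k: "k \<in> {1..h}"
      show "cellf B0 (upd (U (int m) \<omega>, Y \<omega>) (int h - int k)) = cellf B0 (U (int h - int k) \<omega>)"
        using k by (cases "int h - int k = int m") (auto simp: upd_def Y_def I_def)
    qed
    show "Y \<omega> \<in> Dm m \<longleftrightarrow> \<omega> \<in> Dw m"
      unfolding Y_def using Dm_restrict[OF mI2] Dw_Dm[OF \<omega>] by simp
  qed
  have "(\<integral>\<^sup>+\<omega>. indicator (Dw (Suc m)) \<omega> * (1 - Aw h \<omega>) \<partial>M)
      = (\<integral>\<^sup>+\<omega>. (\<lambda>z. indicator {..<a0r} (fst z) * \<psi> z) (U (int m) \<omega>, Y \<omega>) \<partial>M)"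
  proof (rule nn_integral_cong)
    fix \<omega> assume \<omega>: "\<omega> \<in> space M"
    have "\<omega> \<in> Dw (Suc m) \<longleftrightarrow> \<omega> \<in> Dw m \<and> U (int m) \<omega> < a0r"
      using \<omega> unfolding Dw_def by (auto simp: less_Suc_eq)
    then show "indicator (Dw (Suc m)) \<omega> * (1 - Aw h \<omega>) = (\<lambda>z. indicator {..<a0r} (fst z) * \<psi> z) (U (int m) \<omega>, Y \<omega>)"
      using key[OF \<omega>] by (auto simp: \<psi>_def indicator_def)
  qed
  also have "\<dots> = (\<integral>\<^sup>+\<omega>. (\<integral>\<^sup>+x. indicator {..<a0r} x * \<psi> (x, Y \<omega>) \<partial>Qu) \<partial>M)"
    unfolding Y_def using split_lemma[OF mI fm] by simp
  also have "\<dots> \<le> (\<integral>\<^sup>+\<omega>. ennreal a0r * (\<integral>\<^sup>+x. \<psi> (x, Y \<omega>) \<partial>Qu) \<partial>M)"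
  proof (rule nn_integral_mono)
    fix \<omega> assume \<omega>: "\<omega> \<in> space M"
    have y: "Y \<omega> \<in> space (PiM I (\<lambda>_. borel))" using Ym \<omega> by (auto simp: measurable_def)
    show "(\<integral>\<^sup>+x. indicator {..<a0r} x * \<psi> (x, Y \<omega>) \<partial>Qu) \<le> ennreal a0r * (\<integral>\<^sup>+x. \<psi> (x, Y \<omega>) \<partial>Qu)"
    proof (rule avg[OF a0r_bounds])
      show "(\<lambda>x. \<psi> (x, Y \<omega>)) \<in> borel_measurable borel" using \<psi>m y by simp
      fix x
      have "AA h (upd (a0r, Y \<omega>)) \<le> AA h (upd (x, Y \<omega>))"
        unfolding AA_def
        by (rule A_mono_none[OF B0_disj]) (auto simp: upd_def cell_a0r)
      then show "\<psi> (x, Y \<omega>) \<le> \<psi> (a0r, Y \<omega>)"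
        unfolding \<psi>_def by (auto intro!: mult_left_mono ennreal_mono_minus)
      assume "a0r \<le> x" "x < 1"
      then have "AA h (upd (x, Y \<omega>)) = AA h (upd (a0r, Y \<omega>))"
        unfolding AA_def
        by (intro A_cong[OF B0_disj]) (auto simp: upd_def cell_a0r cell_ge)
      then show "\<psi> (x, Y \<omega>) = \<psi> (a0r, Y \<omega>)" unfolding \<psi>_def by simp
    qed
  qed
  also have "\<dots> = ennreal a0r * (\<integral>\<^sup>+\<omega>. (\<integral>\<^sup>+x. \<psi> (x, Y \<omega>) \<partial>Qu) \<partial>M)"
  proof (rule nn_integral_cmult)
    have "(\<lambda>y. \<integral>\<^sup>+x. \<psi> (x, y) \<partial>Qu) \<in> borel_measurable (PiM I (\<lambda>_. borel))"
      by (rule inner_meas[OF \<psi>m])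
    from measurable_compose[OF Ym this] show "(\<lambda>\<omega>. \<integral>\<^sup>+x. \<psi> (x, Y \<omega>) \<partial>Qu) \<in> borel_measurable M" .
  qed
  also have "(\<integral>\<^sup>+\<omega>. (\<integral>\<^sup>+x. \<psi> (x, Y \<omega>) \<partial>Qu) \<partial>M) = (\<integral>\<^sup>+\<omega>. \<psi> (U (int m) \<omega>, Y \<omega>) \<partial>M)"
    unfolding Y_def using split_lemma[OF mI \<psi>m] by simp
  also have "\<dots> = (\<integral>\<^sup>+\<omega>. indicator (Dw m) \<omega> * (1 - Aw h \<omega>) \<partial>M)"
    by (rule nn_integral_cong) (use key in \<open>auto simp: \<psi>_def indicator_def\<close>)
  finally show ?thesis .
qed


lemma C3:
  assumes "m \<le> H" "H \<le> h"
  shows "(\<integral>\<^sup>+\<omega>. indicator (Dw m) \<omega> * (1 - Aw h \<omega>) \<partial>M) \<le> ennreal a0r ^ m * (\<integral>\<^sup>+\<omega>. (1 - Aw h \<omega>) \<partial>M)"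
  using assms(1)
proof (induction m)
  case 0
  have "(\<integral>\<^sup>+\<omega>. indicator (Dw 0) \<omega> * (1 - Aw h \<omega>) \<partial>M) = (\<integral>\<^sup>+\<omega>. (1 - Aw h \<omega>) \<partial>M)"
    by (rule nn_integral_cong) (simp add: Dw_def)
  then show ?case by simp
next
  case (Suc m)
  have "(\<integral>\<^sup>+\<omega>. indicator (Dw (Suc m)) \<omega> * (1 - Aw h \<omega>) \<partial>M)
     \<le> ennreal a0r * (\<integral>\<^sup>+\<omega>. indicator (Dw m) \<omega> * (1 - Aw h \<omega>) \<partial>M)"
    by (rule C2) (use Suc.prems assms(2) in auto)
  also have "\<dots> \<le> ennreal a0r * (ennreal a0r ^ m * (\<integral>\<^sup>+\<omega>. (1 - Aw h \<omega>) \<partial>M))"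
    by (rule mult_left_mono) (use Suc in auto)
  finally show ?case by (simp add: mult.assoc)
qed

lemma Qu_lt: "(\<integral>\<^sup>+x. indicator {..<a0r} x \<partial>Qu) = ennreal a0r"
proof -
  have "(\<integral>\<^sup>+x. indicator {..<a0r} x \<partial>Qu) = emeasure Qu {..<a0r}" by simp
  also have "\<dots> = emeasure lborel {0..<a0r}"
  proof (subst Qu_emeasure)
    have "{0..<1} \<inter> {..<a0r} = {0..<a0r}" using a0r_bounds by auto
    then show "emeasure lborel ({0..<1} \<inter> {..<a0r}) = emeasure lborel {0..<a0r}" by simp
  qed simp
  also have "\<dots> = ennreal a0r" using a0r_bounds by simp
  finally show ?thesis .
qed

lemma C4: "emeasure M (Dw m) = ennreal a0r ^ m"
proof (induction m)
  case 0
  have "Dw 0 = space M" by (simp add: Dw_def)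
  then show ?case using P.emeasure_space_1 by simp
next
  case (Suc m)
  define I where "I = {0..<int m}"
  have mI: "int m \<notin> I" unfolding I_def by auto
  have mI2: "{0..<int m} \<subseteq> I" unfolding I_def by auto
  have Dmm[measurable]: "(\<lambda>y::int\<Rightarrow>real. indicator (Dm m) y :: ennreal) \<in> borel_measurable (PiM I (\<lambda>_. borel))"
    by (rule Dm_meas[OF mI2])
  have fm: "(\<lambda>z. indicator {..<a0r} (fst z) * indicator (Dm m) (snd z) :: ennreal) \<in> borel_measurable (borel \<Otimes>\<^sub>M PiM I (\<lambda>_. borel))"
    by measurable
  have "emeasure M (Dw (Suc m)) = (\<integral>\<^sup>+\<omega>. indicator (Dw (Suc m)) \<omega> \<partial>M)" by simp
  also have "\<dots> = (\<integral>\<^sup>+\<omega>. (\<lambda>z. indicator {..<a0r} (fst z) * indicator (Dm m) (snd z) :: ennreal) (U (int m) \<omega>, restrict (\<lambda>i. U i \<omega>) I) \<partial>M)"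
  proof (rule nn_integral_cong)
    fix \<omega> assume \<omega>: "\<omega> \<in> space M"
    have "\<omega> \<in> Dw (Suc m) \<longleftrightarrow> \<omega> \<in> Dw m \<and> U (int m) \<omega> < a0r"
      using \<omega> unfolding Dw_def by (auto simp: less_Suc_eq)
    moreover have "restrict (\<lambda>i. U i \<omega>) I \<in> Dm m \<longleftrightarrow> \<omega> \<in> Dw m"
      using Dm_restrict[OF mI2] Dw_Dm[OF \<omega>] by simp
    ultimately show "indicator (Dw (Suc m)) \<omega> = (\<lambda>z. indicator {..<a0r} (fst z) * indicator (Dm m) (snd z) :: ennreal) (U (int m) \<omega>, restrict (\<lambda>i. U i \<omega>) I)"
      by (auto simp: indicator_def)
  qed
  also have "\<dots> = (\<integral>\<^sup>+\<omega>. (\<integral>\<^sup>+x. indicator {..<a0r} x * indicator (Dm m) (restrict (\<lambda>i. U i \<omega>) I) \<partial>Qu) \<partial>M)"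
    using split_lemma[OF mI fm] by simp
  also have "\<dots> = (\<integral>\<^sup>+\<omega>. ennreal a0r * indicator (Dw m) \<omega> \<partial>M)"
  proof (rule nn_integral_cong)
    fix \<omega> assume \<omega>: "\<omega> \<in> space M"
    have e: "indicator (Dm m) (restrict (\<lambda>i. U i \<omega>) I) = (indicator (Dw m) \<omega> :: ennreal)"
      using Dm_restrict[OF mI2] Dw_Dm[OF \<omega>] by (simp add: indicator_def)
    show "(\<integral>\<^sup>+x. indicator {..<a0r} x * indicator (Dm m) (restrict (\<lambda>i. U i \<omega>) I) \<partial>Qu) = ennreal a0r * indicator (Dw m) \<omega>"
      unfolding e by (simp add: nn_integral_multc Qu_lt)
  qed
  also have "\<dots> = ennreal a0r * emeasure M (Dw m)"
    by (simp add: nn_integral_cmult)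
  finally show ?case using Suc by simp
qed


end

locale pset1 = pset +
  assumes L1: "(\<integral>\<^sup>+ \<omega>. coup_prod p B0 U \<omega> \<partial>M) < \<infinity>"
begin

interpretation P: prob_space M by (rule prob)

definition "e h = (\<integral>\<^sup>+\<omega>. (1 - Aw h \<omega>) \<partial>M)"

lemma coup_prod_eq: "coup_prod p B0 U \<omega> = lim (\<lambda>N. \<Prod>h<N. inverse (Aw h \<omega>))"
  unfolding coup_prod_def Aw_def AA_def by simp

lemma Aw0: "Aw 0 \<omega> = ennreal a0r"
  unfolding Aw_def AA_def by (rule A0_eq)

lemma a0r_pos: "0 < a0r"
proof (rule ccontr)
  assume "\<not> 0 < a0r"
  then have a: "a0r = 0" using a0r_bounds by simp
  have "(\<integral>\<^sup>+\<omega>. inverse (Aw 0 \<omega>) \<partial>M) \<le> (\<integral>\<^sup>+ \<omega>. coup_prod p B0 U \<omega> \<partial>M)"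
    by (rule nn_integral_mono) (unfold coup_prod_eq, rule prod_bound(2), unfold Aw_def, rule AA_le1)
  moreover have "(\<integral>\<^sup>+\<omega>. inverse (Aw 0 \<omega>) \<partial>M) = top"
    using P.emeasure_space_1 by (simp add: Aw0 a)
  ultimately show False using L1 by (simp add: top_unique)
qed

lemma sum_fin: "(\<Sum>h. e h) < \<infinity>"
proof -
  have "(\<Sum>h. e h) = (\<integral>\<^sup>+\<omega>. (\<Sum>h. (1 - Aw h \<omega>)) \<partial>M)"
    unfolding e_def by (rule nn_integral_suminf[symmetric]) simp
  also have "\<dots> \<le> (\<integral>\<^sup>+ \<omega>. coup_prod p B0 U \<omega> \<partial>M)"
    by (rule nn_integral_mono) (unfold coup_prod_eq, rule prod_bound(1), unfold Aw_def, rule AA_le1)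
  finally show ?thesis using L1 by (rule le_less_trans)
qed

lemma e_le1: "e h \<le> 1"
proof -
  have "e h \<le> (\<integral>\<^sup>+\<omega>. 1 \<partial>M)" unfolding e_def by (rule nn_integral_mono) simp
  then show ?thesis using P.emeasure_space_1 by simp
qed

lemma tail_small: "\<exists>H. (\<Sum>i. e (i + H)) < 1"
proof -
  define f where "f h = enn2real (e h)" for h
  have ef: "e h = ennreal (f h)" for h
  proof -
    have "e h < top" using e_le1[of h] by (rule le_less_trans) simp
    then show ?thesis unfolding f_def by simp
  qed
  have f0: "0 \<le> f h" for h unfolding f_def by simp
  have "(\<Sum>h. ennreal (f h)) \<noteq> top" using sum_fin unfolding ef by simp
  then have sf: "summable f" by (rule summable_suminf_not_top[OF f0])
  obtain N where N: "\<forall>n\<ge>N. norm (\<Sum>i. f (i + n)) < 1" using suminf_exist_split[OF _ sf, of 1] by auto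
  have sfN: "summable (\<lambda>i. f (i + N))" using sf by (rule summable_ignore_initial_segment)
  have "(\<Sum>i. e (i + N)) = ennreal (\<Sum>i. f (i + N))"
    unfolding ef by (rule suminf_ennreal2[OF f0 sfN])
  moreover have "(\<Sum>i. f (i + N)) < 1" using N suminf_nonneg[OF sfN f0] by auto
  ultimately have "(\<Sum>i. e (i + N)) < 1" by (simp add: ennreal_less_iff)
  then show ?thesis by blast
qed


lemma G_pos: "0 < emeasure M G"
proof -
  obtain H where H: "(\<Sum>i. e (i + H)) < 1" using tail_small by blast
  define t where "t = (\<Sum>i. e (i + H))"
  define c where "c = ennreal a0r ^ H"
  have ceq: "c = ennreal (a0r ^ H)" unfolding c_def using a0r_bounds by (simp add: ennreal_power)
  have cpos: "0 < c" unfolding ceq using a0r_pos by simp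
  have ctop: "c < top" unfolding ceq by simp
  have sub: "Dw H \<subseteq> G \<union> (\<Union>i. Dw H \<inter> Fc (i + H))"
  proof
    fix \<omega> assume \<omega>D: "\<omega> \<in> Dw H"
    then have \<omega>: "\<omega> \<in> space M" by (simp add: Dw_def)
    show "\<omega> \<in> G \<union> (\<Union>i. Dw H \<inter> Fc (i + H))"
    proof (cases "\<omega> \<in> G")
      case False
      then obtain h where h: "\<not> ereal (U (int h) \<omega>) < enn2ereal (Aw h \<omega>)" using \<omega> by (auto simp: G_def)
      have "\<not> h < H"
      proof
        assume "h < H"
        then have "U (int h) \<omega> < a0r" using \<omega>D by (simp add: Dw_def)
        then have "ereal (U (int h) \<omega>) < enn2ereal (ennreal a0r)" using a0r_bounds by simp
        also have "\<dots> \<le> enn2ereal (Aw h \<omega>)"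
          using AA_ge unfolding Aw_def less_eq_ennreal.rep_eq by blast
        finally show False using h by simp
      qed
      then have "h = (h - H) + H" by simp
      moreover have "\<omega> \<in> Fc h" using h \<omega> by (simp add: Fc_def not_less)
      ultimately have "\<omega> \<in> Dw H \<inter> Fc ((h - H) + H)" using \<omega>D by simp
      then show ?thesis by blast
    qed simp
  qed
  have "c = emeasure M (Dw H)" by (simp add: C4 c_def)
  also have "\<dots> \<le> emeasure M (G \<union> (\<Union>i. Dw H \<inter> Fc (i + H)))"
    by (rule emeasure_mono[OF sub]) measurable
  also have "\<dots> \<le> emeasure M G + emeasure M (\<Union>i. Dw H \<inter> Fc (i + H))"
    by (rule emeasure_subadditive) measurable
  also have "emeasure M (\<Union>i. Dw H \<inter> Fc (i + H)) \<le> (\<Sum>i. emeasure M (Dw H \<inter> Fc (i + H)))"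
    by (rule emeasure_subadditive_countably) auto
  also have "\<dots> \<le> (\<Sum>i. c * e (i + H))"
  proof (rule suminf_le)
    fix i
    have "emeasure M (Dw H \<inter> Fc (i + H)) = (\<integral>\<^sup>+\<omega>. indicator (Dw H) \<omega> * (1 - Aw (i + H) \<omega>) \<partial>M)"
      by (rule C1) simp
    also have "\<dots> \<le> c * e (i + H)" unfolding c_def e_def by (rule C3) auto
    finally show "emeasure M (Dw H \<inter> Fc (i + H)) \<le> c * e (i + H)" .
  qed auto
  also have "\<dots> = c * t" by (simp add: t_def)
  finally have ineq: "c \<le> emeasure M G + c * t" by simp
  show ?thesis
  proof (rule ccontr)
    assume "\<not> 0 < emeasure M G"
    then have "emeasure M G = 0" by simp
    with ineq have "c \<le> c * t" by simp
    also have "\<dots> < c * 1" using H unfolding t_def by (intro ennreal_mult_strict_left_mono cpos ctop)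
    finally show False by simp
  qed
qed

end


theorem theorem1:
  fixes p :: "'g::countable \<Rightarrow> (nat \<Rightarrow> 'g) \<Rightarrow> real"
    and B0 :: "'g \<Rightarrow> real set"
    and M :: "'a measure"
    and U :: "int \<Rightarrow> 'a \<Rightarrow> real"
  assumes kernel_meas: "\<And>g. p g \<in> borel_measurable (Pi\<^sub>M UNIV (\<lambda>_::nat. count_space (UNIV::'g set)))"
    and kernel_nonneg: "\<And>g w. p g w \<ge> 0"
    and kernel_sum: "\<And>w. ((\<lambda>g. p g w) has_sum 1) UNIV"
    and a_lim: "\<And>w. w \<in> admissible p \<Longrightarrow> (\<lambda>k. coup_a_sum p k w) \<longlonglongrightarrow> 1"
    and B0_int: "\<And>g. \<exists>l. B0 g = {l..<l + enn2real (coup_a p 0 g undefined)}"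
    and B0_disj: "disjoint_family B0"
    and B0_union: "(\<Union>g. B0 g) = {0..<enn2real (coup_a_sum p 0 undefined)}"
    and prob: "prob_space M"
    and indep: "prob_space.indep_vars M (\<lambda>_. borel) U UNIV"
    and unif: "\<And>i. distr M lborel (U i) = uniform_measure lborel {0..<1::real}"
    and L1_meas: "coup_prod p B0 U \<in> borel_measurable M"
    and L1: "(\<integral>\<^sup>+ \<omega>. coup_prod p B0 U \<omega> \<partial>M) < \<infinity>"
  shows "measure M (coup_R0 p B0 M U) > 0"
proof -
  have cs: "cset p B0" using kernel_nonneg kernel_sum B0_int B0_disj B0_union by unfold_locales
  have ps0: "pset0 p B0 M U"
    by (rule pset0.intro[OF cs]) (rule pset0_axioms.intro[OF prob indep unif])
  interpret pset0 p B0 M U by (rule ps0)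
  interpret P: prob_space M by (rule prob)
  have R0s: "coup_R0 p B0 M U \<in> sets M" by (rule R0_sets)
  have pos: "0 < emeasure M (coup_R0 p B0 M U)"
  proof (cases "admissible p = {}")
    case True
    have "G = space M"
    proof -
      have "ereal (U (int h) \<omega>) < enn2ereal (Aw h \<omega>)" for h \<omega>
        unfolding Aw_def AA_def adm_empty[OF True] by simp
      then show ?thesis unfolding G_def by auto
    qed
    then have "emeasure M G = 1" using P.emeasure_space_1 by simp
    moreover have "emeasure M G \<le> emeasure M (coup_R0 p B0 M U)"
      by (rule emeasure_mono[OF G_R0 R0s])
    ultimately show ?thesis using less_le_trans[OF zero_less_one] by metis
  next
    case False
    have ps: "pset p B0 M U" by (rule pset.intro[OF ps0]) (rule pset_axioms.intro[OF False])
    have ps1: "pset1 p B0 M U" by (rule pset1.intro[OF ps]) (rule pset1_axioms.intro[OF L1])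
    interpret pset1 p B0 M U by (rule ps1)
    have "0 < emeasure M G" by (rule G_pos)
    also have "\<dots> \<le> emeasure M (coup_R0 p B0 M U)" by (rule emeasure_mono[OF G_R0 R0s])
    finally show ?thesis .
  qed
  then show ?thesis
    using P.emeasure_eq_measure[of "coup_R0 p B0 M U"] by simp
qed

end
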